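(* Let $G$ be a compact group and $\alpha$ an automorphism of $G$ such that $(G,\alpha)$ is topologically transitive and has finite depth. Then the homoclinic group $\mathrm{con}(\alpha)\cap\mathrm{con}(\alpha^{-1})$ is dense in $G$.
   Context: $\mathrm{con}(\beta)=\{x\in G:\beta^n(x)\to1 \text{ as } n\to\infty\}$. $(G,\alpha)$ is topologically transitive if some orbit $\{\alpha^n(x):n\in\mathbb{Z}\}$ is dense in $G$; it has finite depth if there is an open subgroup $V\le G$ with $\bigcap_{k\in\mathbb{Z}}\alpha^k(V)=\{1\}$. *)

theory Defs
  imports "HOL-Analysis.Analysis"
begin

text \<open>Groups are written additively (class group_add, not necessarily commutative);
  the identity 1 of the paper is 0 here.\<close>

definition topological_group :: "('a::{topological_space, group_add}) itself \<Rightarrow> bool" where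
  "topological_group _ \<longleftrightarrow>
     continuous_on UNIV (\<lambda>p::'a \<times> 'a. fst p + snd p) \<and>
     continuous_on UNIV (\<lambda>x::'a. - x)"

definition top_group_automorphism :: "('a::{topological_space, group_add} \<Rightarrow> 'a) \<Rightarrow> bool" where
  "top_group_automorphism \<alpha> \<longleftrightarrow>
     bij \<alpha> \<and> (\<forall>x y. \<alpha> (x + y) = \<alpha> x + \<alpha> y) \<and>
     continuous_on UNIV \<alpha> \<and> continuous_on UNIV (inv \<alpha>)"

definition zpow :: "('a \<Rightarrow> 'a) \<Rightarrow> int \<Rightarrow> 'a \<Rightarrow> 'a" where
  "zpow \<alpha> k = (if 0 \<le> k then \<alpha> ^^ nat k else (inv \<alpha>) ^^ nat (- k))"

definition con :: "('a::{topological_space, group_add} \<Rightarrow> 'a) \<Rightarrow> 'a set" where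
  "con \<beta> = {x. ((\<lambda>n. (\<beta> ^^ n) x) \<longlongrightarrow> 0) sequentially}"

definition is_subgroup :: "('a::group_add) set \<Rightarrow> bool" where
  "is_subgroup V \<longleftrightarrow> 0 \<in> V \<and> (\<forall>x\<in>V. \<forall>y\<in>V. x + y \<in> V) \<and> (\<forall>x\<in>V. - x \<in> V)"

definition topologically_transitive :: "('a::topological_space \<Rightarrow> 'a) \<Rightarrow> bool" where
  "topologically_transitive \<alpha> \<longleftrightarrow> (\<exists>x. closure (range (\<lambda>k. zpow \<alpha> k x)) = UNIV)"

definition finite_depth :: "('a::{topological_space, group_add} \<Rightarrow> 'a) \<Rightarrow> bool" where
  "finite_depth \<alpha> \<longleftrightarrow>
     (\<exists>V. open V \<and> is_subgroup V \<and> (\<Inter>k. zpow \<alpha> k ` V) = {0})"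

end

theory Submission
  imports Defs
begin

lemma nest_nonempty:
  fixes F :: "nat \<Rightarrow> 'a::topological_space set"
  assumes cpt: "compact (UNIV::'a set)" and cl: "\<And>n. closed (F n)" and ne: "\<And>n. F n \<noteq> {}"
    and dec: "\<And>m n. m \<le> n \<Longrightarrow> F n \<subseteq> F m"
  shows "(\<Inter>n. F n) \<noteq> {}"
proof -
  have "UNIV \<inter> \<Inter>(range F) \<noteq> {}"
  proof (rule compact_imp_fip[OF cpt])
    show "closed T" if "T \<in> range F" for T using that cl by auto
    fix F' assume fin: "finite F'" and sub: "F' \<subseteq> range F"
    then obtain N where N: "finite N" "F' = F ` N"
      by (meson finite_subset_image)
    show "UNIV \<inter> \<Inter>F' \<noteq> {}"
    proof (cases "N = {}")
      case True then show ?thesis using N by auto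
    next
      case False
      have "F (Max N) \<subseteq> \<Inter>F'" using N False dec Max_ge by blast
      then show ?thesis using ne[of "Max N"] by auto
    qed
  qed
  then show ?thesis by simp
qed

lemma zpow_succ:
  assumes "bij f" shows "zpow f (k+1) y = f (zpow f k y)"
proof (cases "0 \<le> k")
  case True
  then have "nat (k+1) = Suc (nat k)" by simp
  then show ?thesis using True by (simp add: zpow_def)
next
  case False
  then have e: "nat (-k) = Suc (nat (-(k+1)))" by simp
  have a: "zpow f (k+1) y = (inv f ^^ nat (-(k+1))) y"
    using False by (auto simp: zpow_def)
  have b: "zpow f k y = inv f ((inv f ^^ nat (-(k+1))) y)"
    using False e by (simp add: zpow_def)
  show ?thesis using a b assms by (simp add: bij_is_surj surj_f_inv_f)
qed

lemma zpow_pred: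
  assumes "bij f" shows "zpow f (k-1) y = inv f (zpow f k y)"
proof -
  have "zpow f k y = f (zpow f (k-1) y)" using zpow_succ[OF assms, of "k-1" y] by simp
  then show ?thesis using assms by (simp add: bij_is_inj)
qed

lemma zpow_0: "zpow f 0 y = y" by (simp add: zpow_def)

lemma zpow_add:
  assumes "bij f" shows "zpow f (a+b) x = zpow f a (zpow f b x)"
proof (induction a rule: int_induct[where k=0])
  case base then show ?case by (simp add: zpow_0)
next
  case (step1 i)
  have "zpow f (i + 1 + b) x = zpow f ((i+b)+1) x" by (simp add: ac_simps)
  also have "\<dots> = f (zpow f (i+b) x)" by (rule zpow_succ[OF assms])
  finally show ?case using step1 zpow_succ[OF assms] by simp
next
  case (step2 i)
  have "i - 1 + b = (i+b)-1" by simp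
  then have "zpow f (i - 1 + b) x = zpow f ((i+b)-1) x" by metis
  also have "\<dots> = inv f (zpow f (i+b) x)" by (rule zpow_pred[OF assms])
  finally show ?case using step2 zpow_pred[OF assms] by simp
qed

lemma inv_additive:
  fixes f :: "'a::group_add \<Rightarrow> 'a"
  assumes "bij f" "\<And>x y. f (x+y) = f x + f y"
  shows "inv f (u+v) = inv f u + inv f v"
proof -
  have "f (inv f u + inv f v) = u + v" using assms by (simp add: bij_is_surj surj_f_inv_f)
  then have "inv f (f (inv f u + inv f v)) = inv f (u+v)" by (simp only:)
  then show ?thesis using assms by (metis bij_is_inj inv_f_f)
qed

lemma zpow_additive:
  fixes f :: "'a::group_add \<Rightarrow> 'a"
  assumes "bij f" "\<And>x y. f (x+y) = f x + f y"
  shows "zpow f k (x+y) = zpow f k x + zpow f k y"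
proof (induction k rule: int_induct[where k=0])
  case base then show ?case by (simp add: zpow_0)
next
  case (step1 i) then show ?case by (simp add: zpow_succ[OF assms(1)] assms(2))
next
  case (step2 i) then show ?case by (simp add: zpow_pred[OF assms(1)] inv_additive[OF assms])
qed

lemma zpow_cont:
  assumes "bij f" "continuous_on UNIV f" "continuous_on UNIV (inv f)"
  shows "continuous_on UNIV (zpow f k)"
proof (induction k rule: int_induct[where k=0])
  case base then show ?case by (simp add: zpow_0[abs_def])
next
  case (step1 i)
  have "zpow f (i+1) = (\<lambda>y. f (zpow f i y))" by (rule ext) (simp add: zpow_succ[OF assms(1)])
  then show ?case using step1 by (metis assms(2) continuous_on_compose2 subset_UNIV)
next
  case (step2 i)
  have "zpow f (i-1) = (\<lambda>y. inv f (zpow f i y))" by (rule ext) (simp add: zpow_pred[OF assms(1)])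
  then show ?case using step2 by (metis assms(3) continuous_on_compose2 subset_UNIV)
qed

locale zact =
  fixes P :: "int \<Rightarrow> 'a::{t2_space,group_add} \<Rightarrow> 'a" and V :: "'a set"
  assumes tg: "topological_group TYPE('a)"
   and cpt: "compact (UNIV::'a set)"
   and P_add: "\<And>k x y. P k (x+y) = P k x + P k y"
   and P_comp: "\<And>a b x. P (a+b) x = P a (P b x)"
   and P_0: "\<And>x. P 0 x = x"
   and P_cont: "\<And>k. continuous_on UNIV (P k)"
   and openV: "open V" and subV: "is_subgroup V"
   and depth: "\<And>y. (\<forall>j. P j y \<in> V) \<Longrightarrow> y = 0"
begin

lemma P_zero[simp]: "P k 0 = 0"
  using P_add[of k 0 0] by (metis add.right_neutral add_left_cancel)

lemma P_neg: "P k (-x) = - P k x"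
proof -
  have "P k (-x) + P k x = 0" using P_add[of k "-x" x, symmetric] by simp
  then show ?thesis by (simp add: eq_neg_iff_add_eq_0)
qed

lemma V0: "0 \<in> V" and Vadd: "a \<in> V \<Longrightarrow> b \<in> V \<Longrightarrow> a + b \<in> V" and Vneg: "a \<in> V \<Longrightarrow> -a \<in> V"
  using subV unfolding is_subgroup_def by auto

lemma gV1: "a \<in> V \<Longrightarrow> -b + a \<in> V \<Longrightarrow> b \<in> V"
proof -
  assume "a \<in> V" "-b + a \<in> V"
  then have "a + -(-b + a) \<in> V" using Vadd Vneg by blast
  moreover have "a + -(-b + a) = b" by (simp add: minus_add add.assoc)
  ultimately show "b \<in> V" by simp
qed

lemma gV2: "-a + b \<in> V \<Longrightarrow> -b + c \<in> V \<Longrightarrow> -a + c \<in> V"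
proof -
  assume "-a + b \<in> V" "-b + c \<in> V"
  then have "(-a + b) + (-b + c) \<in> V" by (simp add: Vadd)
  then show ?thesis by (simp add: add.assoc)
qed

lemma gV3: "-a + b \<in> V \<Longrightarrow> -b + a \<in> V"
  using Vneg[of "-a+b"] by (simp add: minus_add)

lemma cont_add:
  fixes f g :: "'b::topological_space \<Rightarrow> 'a"
  shows "continuous_on UNIV f \<Longrightarrow> continuous_on UNIV g \<Longrightarrow> continuous_on UNIV (\<lambda>x. f x + g x)"
  using tg unfolding topological_group_def
  using continuous_on_compose2[of UNIV "\<lambda>p::'a\<times>'a. fst p + snd p" UNIV "\<lambda>x. (f x, g x)"]
  by (simp add: continuous_on_Pair)

lemma cont_neg:
  fixes f :: "'b::topological_space \<Rightarrow> 'a"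
  shows "continuous_on UNIV f \<Longrightarrow> continuous_on UNIV (\<lambda>x. - f x)"
  using tg unfolding topological_group_def
  using continuous_on_compose2[of UNIV "\<lambda>x::'a. - x" UNIV f]
  by simp

lemma cont_lin: "continuous_on UNIV (\<lambda>y. P j (- y + c))"
  by (intro continuous_on_compose2[OF P_cont[of j]] cont_add cont_neg continuous_on_id continuous_on_const) auto

lemma cont_lin2: "continuous_on UNIV (\<lambda>y. P j (- c + y))"
  by (intro continuous_on_compose2[OF P_cont[of j]] cont_add cont_neg continuous_on_id continuous_on_const) auto

lemma cont_transl: "continuous_on UNIV (\<lambda>y. (c::'a) + y)"
  using cont_add[OF continuous_on_const continuous_on_id] .

lemma open_coset: "open {u. -c + u \<in> V}"
proof -
  have "open ((\<lambda>y. P 0 (-c + y)) -` V)" by (rule open_vimage[OF openV cont_lin2])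
  then show ?thesis by (simp add: P_0 vimage_def)
qed

lemma closedV: "closed V"
  unfolding closed_def
proof (subst open_subopen, intro ballI)
  fix y assume y: "y \<in> - V"
  show "\<exists>T. open T \<and> y \<in> T \<and> T \<subseteq> - V"
  proof (intro exI conjI)
    show "open {u. -y + u \<in> V}" by (rule open_coset)
    show "y \<in> {u. -y + u \<in> V}" using V0 by simp
    show "{u. -y + u \<in> V} \<subseteq> - V" using y gV1 by blast
  qed
qed

lemma closed_T: "closed {x. \<forall>j\<in>S. P j x \<in> V}"
proof -
  have "{x. \<forall>j\<in>S. P j x \<in> V} = (\<Inter>j\<in>S. P j -` V)" by auto
  then show ?thesis by (simp add: closed_INT closed_vimage closedV P_cont)
qed

lemma open_T: "finite S \<Longrightarrow> open {x. \<forall>j\<in>S. P j x \<in> V}"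
proof -
  assume "finite S"
  have "{x. \<forall>j\<in>S. P j x \<in> V} = (\<Inter>j\<in>S. P j -` V)" by auto
  then show ?thesis using \<open>finite S\<close> by (simp add: open_INT open_vimage openV P_cont)
qed

lemma open_cosets: "open {t + v | t v. t \<in> S \<and> v \<in> V}"
proof (subst open_subopen, intro ballI)
  fix x assume "x \<in> {t + v | t v. t \<in> S \<and> v \<in> V}"
  then obtain t v where tv: "x = t + v" "t \<in> S" "v \<in> V" by auto
  show "\<exists>T. open T \<and> x \<in> T \<and> T \<subseteq> {t + v | t v. t \<in> S \<and> v \<in> V}"
  proof (intro exI conjI)
    show "open {u. -t + u \<in> V}" by (rule open_coset)
    show "x \<in> {u. -t + u \<in> V}" using tv by (simp add: add.assoc[symmetric])
    show "{u. -t + u \<in> V} \<subseteq> {t + v | t v. t \<in> S \<and> v \<in> V}"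
    proof
      fix u assume "u \<in> {u. -t + u \<in> V}"
      then have "u = t + (-t + u)" "-t + u \<in> V" by (simp_all add: add.assoc[symmetric])
      then show "u \<in> {t + v | t v. t \<in> S \<and> v \<in> V}" using tv by blast
    qed
  qed
qed

lemma closed_cosets: "closed {t + v | t v. t \<in> S \<and> v \<in> V}"
  unfolding closed_def
proof (subst open_subopen, intro ballI)
  fix x assume x: "x \<in> - {t + v | t v. t \<in> S \<and> v \<in> V}"
  show "\<exists>T. open T \<and> x \<in> T \<and> T \<subseteq> - {t + v | t v. t \<in> S \<and> v \<in> V}"
  proof (intro exI conjI)
    show "open {u. -x + u \<in> V}" by (rule open_coset)
    show "x \<in> {u. -x + u \<in> V}" using V0 by simp
    show "{u. -x + u \<in> V} \<subseteq> - {t + v | t v. t \<in> S \<and> v \<in> V}"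
    proof
      fix u assume u: "u \<in> {u. -x + u \<in> V}"
      show "u \<in> - {t + v | t v. t \<in> S \<and> v \<in> V}"
      proof
        assume "u \<in> {t + v | t v. t \<in> S \<and> v \<in> V}"
        then obtain t v where tv: "u = t + v" "t \<in> S" "v \<in> V" by auto
        have "-u + x \<in> V" using u gV3 by auto
        then have "v + (-u + x) \<in> V" using tv Vadd by auto
        moreover have "x = t + (v + (-u + x))"
        proof -
          have "t + (v + (-u + x)) = (t + v) + (-u + x)" by (simp only: add.assoc)
          also have "\<dots> = u + (-u + x)" using tv by simp
          also have "\<dots> = x" by (rule add_minus_cancel)
          finally show ?thesis by simp
        qed
        ultimately show False using x tv by blast
      qed
    qed
  qed
qed

end

context zact begin

lemma cut0: "\<exists>M::nat. \<forall>y. (\<forall>j\<in>{1..int M}. P j y \<in> V) \<longrightarrow> (\<exists>s. (\<forall>j\<ge>1. P j s \<in> V) \<and> -s + y \<in> V)"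
proof -
  define Y where "Y n = {t + v | t v. t \<in> {x. \<forall>j\<in>{1..int n}. P j x \<in> V} \<and> v \<in> V}" for n :: nat
  define Yi where "Yi = {t + v | t v. t \<in> {x. \<forall>j\<in>{1..}. P j x \<in> V} \<and> v \<in> V}"
  have claim1: "y \<in> Yi" if yall: "\<forall>n. y \<in> Y n" for y
  proof -
    define F where "F n = {t. \<forall>j\<in>{1..int n}. P j t \<in> V} \<inter> (\<lambda>t. P 0 (-t + y)) -` V" for n :: nat
    have "(\<Inter>n. F n) \<noteq> {}"
    proof (rule nest_nonempty[OF cpt])
      show "closed (F n)" for n unfolding F_def
        by (intro closed_Int closed_T closed_vimage closedV cont_lin)
      show "F n \<noteq> {}" for n
      proof -
        from yall obtain t v where tv: "y = t + v" "\<forall>j\<in>{1..int n}. P j t \<in> V" "v \<in> V"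
          unfolding Y_def by blast
        have "-t + y = v" using tv by (simp add: add.assoc[symmetric])
        then have "t \<in> F n" using tv by (simp add: F_def P_0)
        then show ?thesis by auto
      qed
      show "F n \<subseteq> F m" if "m \<le> n" for m n using that unfolding F_def by auto
    qed
    then obtain t where t: "\<And>n. t \<in> F n" by blast
    have "\<forall>j\<in>{1..}. P j t \<in> V"
    proof
      fix j :: int assume "j \<in> {1..}"
      then show "P j t \<in> V" using t[of "nat j"] by (simp add: F_def)
    qed
    moreover have "-t + y \<in> V" using t[of 0] by (simp add: F_def P_0)
    moreover have "y = t + (-t + y)" by (simp add: add.assoc[symmetric])
    ultimately show ?thesis unfolding Yi_def by blast
  qed
  show ?thesis
  proof (rule ccontr)
    assume H: "\<not> ?thesis"
    define F where "F n = Y n \<inter> - Yi" for n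
    have "(\<Inter>n. F n) \<noteq> {}"
    proof (rule nest_nonempty[OF cpt])
      show "closed (F n)" for n
      proof -
        have "closed (Y n)" unfolding Y_def by (rule closed_cosets)
        moreover have "open Yi" unfolding Yi_def by (rule open_cosets)
        ultimately show ?thesis unfolding F_def by (simp add: closed_Int open_closed)
      qed
      show "F n \<noteq> {}" for n
      proof -
        from H obtain y where y1: "\<forall>j\<in>{1..int n}. P j y \<in> V"
          and y2: "\<not> (\<exists>s. (\<forall>j\<ge>1. P j s \<in> V) \<and> -s + y \<in> V)" by blast
        have "y \<in> Y n" using y1 V0 unfolding Y_def by force
        moreover have "y \<notin> Yi"
        proof
          assume "y \<in> Yi"
          then obtain t v where tv: "y = t + v" "\<forall>j\<in>{1..}. P j t \<in> V" "v \<in> V"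
            unfolding Yi_def by blast
          have "-t + y = v" using tv by (simp add: add.assoc[symmetric])
          then show False using y2 tv by auto
        qed
        ultimately show ?thesis unfolding F_def by blast
      qed
      show "F n \<subseteq> F m" if "m \<le> n" for m n using that unfolding F_def Y_def by force
    qed
    then obtain y where "\<And>n. y \<in> F n" by blast
    then show False using claim1 unfolding F_def by blast
  qed
qed

lemma cut1: obtains M :: nat where
  "\<And>y p. \<forall>j\<in>{p+1..p+int M}. P j y \<in> V \<Longrightarrow> \<exists>s. (\<forall>j\<ge>p+1. P j s \<in> V) \<and> P p (-s + y) \<in> V"
proof -
  from cut0 obtain M :: nat where M: "\<And>y. (\<forall>j\<in>{1..int M}. P j y \<in> V) \<Longrightarrow> (\<exists>s. (\<forall>j\<ge>1. P j s \<in> V) \<and> -s + y \<in> V)"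
    by blast
  have "\<exists>s. (\<forall>j\<ge>p+1. P j s \<in> V) \<and> P p (-s + y) \<in> V" if yb: "\<forall>j\<in>{p+1..p+int M}. P j y \<in> V" for y p
  proof -
    have "\<forall>j\<in>{1..int M}. P j (P p y) \<in> V"
    proof
      fix j assume "j \<in> {1..int M}"
      then have "j + p \<in> {p+1..p+int M}" by auto
      then show "P j (P p y) \<in> V" using yb by (simp add: P_comp[symmetric])
    qed
    then obtain s0 where s0: "\<forall>j\<ge>1. P j s0 \<in> V" "-s0 + P p y \<in> V" using M by blast
    define s where "s = P (-p) s0"
    have "\<forall>j\<ge>p+1. P j s \<in> V"
    proof (intro allI impI)
      fix j assume "j \<ge> p+1"
      then have "P (j + -p) s0 \<in> V" using s0 by simp
      then show "P j s \<in> V" using P_comp[of j "-p" s0] by (simp add: s_def)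
    qed
    moreover have "P p s = s0" unfolding s_def using P_comp[of p "-p" s0] by (simp add: P_0)
    then have "P p (-s + y) \<in> V" using s0 by (simp add: P_add P_neg)
    ultimately show ?thesis by blast
  qed
  then show ?thesis using that by blast
qed

lemma cut2: obtains M :: nat where
  "\<And>x p. \<forall>j\<in>{p+1..p+int M}. P j x \<in> V \<Longrightarrow> \<exists>s. (\<forall>j\<ge>p+1. P j s \<in> V) \<and> (\<forall>j\<le>p+int M. P j (-s + x) \<in> V)"
proof -
  from cut1 obtain M :: nat where M: "\<And>y p. \<forall>j\<in>{p+1..p+int M}. P j y \<in> V \<Longrightarrow> \<exists>s. (\<forall>j\<ge>p+1. P j s \<in> V) \<and> P p (-s + y) \<in> V"
    by blast
  have "\<exists>s. (\<forall>j\<ge>p+1. P j s \<in> V) \<and> (\<forall>j\<le>p+int M. P j (-s + x) \<in> V)"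
    if xb: "\<forall>j\<in>{p+1..p+int M}. P j x \<in> V" for x p
  proof -
    define F where "F k = {s. (\<forall>j\<ge>p+1. P j s \<in> V) \<and> (\<forall>j\<in>{p+1-int k..p+int M}. P j (-s + x) \<in> V)}" for k :: nat
    have ind: "F k \<noteq> {}" for k
    proof (induction k)
      case 0
      have "0 \<in> F 0" using xb V0 by (simp add: F_def)
      then show ?case by blast
    next
      case (Suc k)
      then obtain \<sigma> where \<sigma>: "\<forall>j\<ge>p+1. P j \<sigma> \<in> V" "\<forall>j\<in>{p+1-int k..p+int M}. P j (-\<sigma> + x) \<in> V"
        unfolding F_def by blast
      define y where "y = -\<sigma> + x"
      have "\<forall>j\<in>{(p - int k)+1..(p - int k)+int M}. P j y \<in> V" using \<sigma>(2) by (auto simp: y_def)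
      then obtain s' where s': "\<forall>j\<ge>(p - int k)+1. P j s' \<in> V" "P (p - int k) (-s' + y) \<in> V"
        using M by blast
      have "-(\<sigma> + s') = -s' + -\<sigma>" by (rule minus_add)
      then have e: "-(\<sigma> + s') + x = -s' + y" by (simp only: y_def add.assoc)
      have "\<sigma> + s' \<in> F (Suc k)"
        unfolding F_def
      proof (intro CollectI conjI allI impI ballI)
        fix j assume "p + 1 \<le> j"
        then show "P j (\<sigma> + s') \<in> V" using \<sigma>(1) s'(1) by (simp add: P_add Vadd)
      next
        fix j assume j: "j \<in> {p + 1 - int (Suc k)..p + int M}"
        show "P j (-(\<sigma> + s') + x) \<in> V"
        proof (cases "j = p - int k")
          case True then show ?thesis using s'(2) e by simp
        next
          case False
          then have "j \<in> {p+1-int k..p+int M}" using j by auto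
          then have "P j y \<in> V" "P j s' \<in> V" using \<sigma>(2) s'(1) by (auto simp: y_def)
          then show ?thesis unfolding e by (simp add: P_add P_neg Vadd Vneg)
        qed
      qed
      then show ?case by blast
    qed
    have "(\<Inter>k. F k) \<noteq> {}"
    proof (rule nest_nonempty[OF cpt _ ind])
      show "closed (F k)" for k
      proof -
        have "F k = (\<Inter>j\<in>{p+1..}. P j -` V) \<inter> (\<Inter>j\<in>{p+1-int k..p+int M}. (\<lambda>s. P j (-s + x)) -` V)"
          unfolding F_def by auto
        then show ?thesis
          by (simp add: closed_INT closed_Int closed_vimage closedV P_cont cont_lin)
      qed
      show "F n \<subseteq> F m" if "m \<le> n" for m n using that unfolding F_def by auto
    qed
    then obtain s where s: "\<And>k. s \<in> F k" by blast
    show ?thesis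
    proof (intro exI conjI allI impI)
      show "P j s \<in> V" if "j \<ge> p+1" for j using s[of 0] that by (simp add: F_def)
      fix j assume j: "j \<le> p + int M"
      show "P j (-s + x) \<in> V" using s[of "nat (p+1-j)"] j by (simp add: F_def)
    qed
  qed
  then show ?thesis using that by blast
qed

lemma basis:
  assumes "open U" "0 \<in> U" shows "\<exists>m::nat. {x. \<forall>j\<in>{-int m..int m}. P j x \<in> V} \<subseteq> U"
proof (rule ccontr)
  assume H: "\<not> ?thesis"
  define F where "F m = {x. \<forall>j\<in>{-int m..int m}. P j x \<in> V} \<inter> - U" for m :: nat
  have "(\<Inter>m. F m) \<noteq> {}"
  proof (rule nest_nonempty[OF cpt])
    show "closed (F m)" for m unfolding F_def using assms(1) by (intro closed_Int closed_T) auto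
    show "F m \<noteq> {}" for m using H unfolding F_def by blast
    show "F n \<subseteq> F m" if "m \<le> n" for m n using that unfolding F_def by auto
  qed
  then obtain y where y: "\<And>m. y \<in> F m" by blast
  have "\<forall>j. P j y \<in> V"
  proof
    fix j
    have "j \<in> {-int (nat \<bar>j\<bar>)..int (nat \<bar>j\<bar>)}" by auto
    then show "P j y \<in> V" using y[of "nat \<bar>j\<bar>"] unfolding F_def by blast
  qed
  then have "y = 0" by (rule depth)
  then show False using y[of 0] assms(2) by (simp add: F_def)
qed

lemma tends:
  assumes "\<forall>j\<ge>p. P j \<tau> \<in> V" shows "((\<lambda>n. P (int n) \<tau>) \<longlongrightarrow> 0) sequentially"
  unfolding tendsto_def
proof (intro allI impI)
  fix S :: "'a set" assume S: "open S" "0 \<in> S"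
  from basis[OF S] obtain m :: nat where m: "{x. \<forall>j\<in>{-int m..int m}. P j x \<in> V} \<subseteq> S" by blast
  show "\<forall>\<^sub>F n in sequentially. P (int n) \<tau> \<in> S"
    unfolding eventually_sequentially
  proof (intro exI allI impI)
    fix n assume n: "nat (p + int m) \<le> n"
    have "\<forall>j\<in>{-int m..int m}. P j (P (int n) \<tau>) \<in> V"
    proof
      fix j assume "j \<in> {-int m..int m}"
      then have "j + int n \<ge> p" using n by auto
      then show "P j (P (int n) \<tau>) \<in> V" using assms by (simp add: P_comp[symmetric])
    qed
    then show "P (int n) \<tau> \<in> S" using m by blast
  qed
qed

lemma mirror: "zact (\<lambda>k. P (-k)) V"
proof
  show "topological_group TYPE('a)" by (rule tg)
  show "compact (UNIV::'a set)" by (rule cpt)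
  show "P (- k) (x + y) = P (- k) x + P (- k) y" for k x y by (rule P_add)
  show "P (- (a + b)) x = P (- a) (P (- b) x)" for a b x using P_comp[of "-a" "-b" x] by simp
  show "P (- 0) x = x" for x by (simp add: P_0)
  show "continuous_on UNIV (P (- k))" for k by (rule P_cont)
  show "open V" by (rule openV)
  show "is_subgroup V" by (rule subV)
  show "y = 0" if "\<forall>j. P (- j) y \<in> V" for y
  proof (rule depth, rule allI)
    fix j show "P j y \<in> V" using that[rule_format, of "-j"] by simp
  qed
qed

end

context zact begin

lemma inf_open:
  assumes "\<not> open {0::'a}" "open (W::'a set)" "W \<noteq> {}" shows "infinite W"
proof
  assume fin: "finite W"
  from assms(3) obtain w where w: "w \<in> W" by blast
  have "closed (W - {w})" using fin by (intro finite_imp_closed) simp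
  then have "open (W \<inter> - (W - {w}))" using assms(2) by (simp add: open_Int closed_def)
  moreover have "W \<inter> - (W - {w}) = {w}" using w by auto
  ultimately have "open {w}" by simp
  then have "open ((\<lambda>u. w + u) -` {w})" by (rule open_vimage[OF _ cont_transl])
  moreover have "(\<lambda>u. w + u) -` {w} = {0}" by (auto, metis add_left_cancel add.right_neutral)
  ultimately show False using assms(1) by simp
qed

lemma L1:
  assumes dense: "closure (range (\<lambda>k. P k z)) = UNIV" and nz: "\<not> open {0::'a}"
    and W: "open W" "W \<noteq> {}"
  shows "\<exists>y\<in>W. \<exists>k\<ge>b. P k y \<in> W"
proof -
  define K where "K = {k. P k z \<in> W}"
  have infK: "infinite K"
  proof
    assume fK: "finite K"
    define W' where "W' = W - (\<lambda>k. P k z) ` K"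
    have "open W'" unfolding W'_def using fK W(1) by (simp add: open_Diff finite_imp_closed)
    moreover have "W' \<noteq> {}"
    proof
      assume "W' = {}"
      then have "W \<subseteq> (\<lambda>k. P k z) ` K" unfolding W'_def by auto
      then have "finite W" using fK finite_subset by blast
      then show False using inf_open[OF nz W] by simp
    qed
    moreover have "W' \<inter> range (\<lambda>k. P k z) = {}" unfolding W'_def K_def by auto
    ultimately show False using open_Int_closure_eq_empty[of W' "range (\<lambda>k. P k z)"] dense by auto
  qed
  then obtain k0 where k0: "k0 \<in> K" by (metis finite.emptyI ex_in_conv)
  have "\<not> K \<subseteq> {k0 - b <..< k0 + b}" using infK finite_subset by (metis finite_greaterThanLessThan_int)
  then obtain k where k1: "k \<in> K" "k \<notin> {k0 - b <..< k0 + b}" by blast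
  then have k: "k \<in> K" "k \<le> k0 - b \<or> k \<ge> k0 + b" by auto
  show ?thesis
  proof (cases "k \<ge> k0 + b")
    case True
    have "P (k - k0) (P k0 z) = P k z" using P_comp[of "k - k0" k0 z] by simp
    then show ?thesis using True k k0 unfolding K_def by (intro bexI[of _ "P k0 z"] exI[of _ "k - k0"]) auto
  next
    case False
    then have "k \<le> k0 - b" using k by auto
    have "P (k0 - k) (P k z) = P k0 z" using P_comp[of "k0 - k" k z] by simp
    then show ?thesis using \<open>k \<le> k0 - b\<close> k k0 unfolding K_def by (intro bexI[of _ "P k z"] exI[of _ "k0 - k"]) auto
  qed
qed

lemma L2:
  assumes dense: "closure (range (\<lambda>k. P k z)) = UNIV" and nz: "\<not> open {0::'a}"
    and A: "open A" "A \<noteq> {}" and B: "open B" "B \<noteq> {}"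
  shows "\<exists>y\<in>A. \<exists>k\<ge>b. P k y \<in> B"
proof -
  have "A \<inter> range (\<lambda>k. P k z) \<noteq> {}" using open_Int_closure_eq_empty[OF A(1), of "range (\<lambda>k. P k z)"] dense A(2) by auto
  then obtain i where i: "P i z \<in> A" by auto
  have "B \<inter> range (\<lambda>k. P k z) \<noteq> {}" using open_Int_closure_eq_empty[OF B(1), of "range (\<lambda>k. P k z)"] dense B(2) by auto
  then obtain j where j: "P j z \<in> B" by auto
  define n where "n = j - i"
  have "P n (P i z) = P j z" using P_comp[of n i z] by (simp add: n_def)
  define W where "W = A \<inter> P n -` B"
  have "open W" unfolding W_def by (intro open_Int A(1) open_vimage B(1) P_cont)
  moreover have "W \<noteq> {}" unfolding W_def using i j \<open>P n (P i z) = P j z\<close> by auto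
  ultimately obtain w k where w: "w \<in> W" "k \<ge> b - n" "P k w \<in> W" using L1[OF dense nz] by blast
  have "P (n + k) w \<in> B" using w(3) P_comp[of n k w] unfolding W_def by simp
  then show ?thesis using w unfolding W_def by (intro bexI[of _ w] exI[of _ "n+k"]) auto
qed

lemma cut2_ex: "\<exists>M::nat. \<forall>x p. (\<forall>j\<in>{p+1..p+int M}. P j x \<in> V) \<longrightarrow> (\<exists>s. (\<forall>j\<ge>p+1. P j s \<in> V) \<and> (\<forall>j\<le>p+int M. P j (-s + x) \<in> V))"
  by (rule cut2) blast

end

context zact begin

lemma core:
  assumes dense: "closure (range (\<lambda>k. P k z)) = UNIV" and nz: "\<not> open {0::'a}"
    and U: "open U" "x \<in> U"
  shows "\<exists>\<tau>. (\<exists>p. \<forall>j\<ge>p. P j \<tau> \<in> V) \<and> (\<exists>q. \<forall>j\<ge>q. P (-j) \<tau> \<in> V) \<and> \<tau> \<in> U"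
proof -
  interpret mir: zact "\<lambda>k. P (-k)" V by (rule mirror)
  obtain M :: nat where M0: "\<forall>x p. (\<forall>j\<in>{p+1..p+int M}. P j x \<in> V) \<longrightarrow>
      (\<exists>s. (\<forall>j\<ge>p+1. P j s \<in> V) \<and> (\<forall>j\<le>p+int M. P j (-s + x) \<in> V))"
    using cut2_ex by (elim exE)
  note M = M0[rule_format]
  obtain M' :: nat where M0': "\<forall>x p. (\<forall>j\<in>{p+1..p+int M'}. P (-j) x \<in> V) \<longrightarrow>
      (\<exists>s. (\<forall>j\<ge>p+1. P (-j) s \<in> V) \<and> (\<forall>j\<le>p+int M'. P (-j) (-s + x) \<in> V))"
    using mir.cut2_ex by (elim exE)
  note M' = M0'[rule_format]
  define U' where "U' = (\<lambda>y. x + y) -` U"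
  have "open U'" unfolding U'_def by (rule open_vimage[OF U(1) cont_transl])
  moreover have "0 \<in> U'" using U(2) by (simp add: U'_def)
  ultimately obtain m :: nat where m: "{w. \<forall>j\<in>{-int m..int m}. P j w \<in> V} \<subseteq> U'"
    using basis by blast
  define L where "L = int M + int M'"
  define U1 where "U1 = (\<lambda>y. -x + y) -` {w. \<forall>j\<in>{-int m..int m}. P j w \<in> V}"
  have oU1: "open U1" unfolding U1_def by (rule open_vimage[OF open_T cont_transl]) simp
  have xU1: "x \<in> U1" using V0 by (simp add: U1_def)
  define U0 where "U0 = {w. \<forall>j\<in>{0..L}. P j w \<in> V}"
  have oU0: "open U0" unfolding U0_def by (rule open_T) simp
  have zU0: "0 \<in> U0" using V0 by (simp add: U0_def)
  have ne1: "U1 \<noteq> {}" using xU1 by blast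
  have ne0: "U0 \<noteq> {}" using zU0 by blast
  obtain y1 k where y1: "y1 \<in> U1" "k \<ge> int m + 1" "P k y1 \<in> U0"
    using L2[OF dense nz oU1 ne1 oU0 ne0, of "int m + 1"] by blast
  define A' where "A' = U1 \<inter> P k -` U0"
  have oA': "open A'" unfolding A'_def by (intro open_Int oU1 open_vimage oU0 P_cont)
  have neA: "A' \<noteq> {}" using y1 unfolding A'_def by blast
  obtain y0 k' where y0: "y0 \<in> U0" "k' \<ge> int m + L + 1" "P k' y0 \<in> A'"
    using L2[OF dense nz oU0 ne0 oA' neA, of "int m + L + 1"] by blast
  define y where "y = P k' y0"
  have hy1: "\<forall>j\<in>{-int m..int m}. P j (-x + y) \<in> V" using y0(3) by (simp add: A'_def U1_def y_def)
  have hy2: "P j y \<in> V" if "j \<in> {k..k+L}" for j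
  proof -
    have "P (j - k) (P k y) \<in> V" using y0(3) that by (simp add: A'_def U0_def y_def)
    then show ?thesis using P_comp[of "j-k" k y] by simp
  qed
  have hy3: "P j y \<in> V" if "j \<in> {-k'..-k'+L}" for j
  proof -
    have "P (j + k') y0 \<in> V" using y0(1) that by (simp add: U0_def)
    then show ?thesis using P_comp[of j k' y0] by (simp add: y_def)
  qed
  have "\<forall>j\<in>{(k-1)+1..(k-1)+int M}. P j y \<in> V" using hy2 by (simp add: L_def)
  then obtain s where s1: "\<forall>j\<ge>k. P j s \<in> V" and s2: "\<forall>j\<le>k-1+int M. P j (-s + y) \<in> V"
    using M[of "k-1" y] by (metis add.commute diff_add_cancel)
  define p' where "p' = k' - int M'"
  have "\<forall>j\<in>{p'+1..p'+int M'}. P (-j) s \<in> V"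
  proof
    fix j assume j: "j \<in> {p'+1..p'+int M'}"
    have "P (-j) y \<in> V" using hy3[of "-j"] j y0(2) by (simp add: p'_def L_def)
    moreover have "P (-j) (-s + y) \<in> V" using s2 j y0(2) y1(2) by (simp add: p'_def L_def)
    then have "-P (-j) s + P (-j) y \<in> V" by (simp add: P_add P_neg)
    ultimately show "P (-j) s \<in> V" by (rule gV1)
  qed
  then obtain \<tau> where t1: "\<forall>j\<ge>p'+1. P (-j) \<tau> \<in> V" and t2: "\<forall>j\<le>p'+int M'. P (-j) (-\<tau> + s) \<in> V"
    using M'[of p' s] by blast
  have t2': "P j (-\<tau> + s) \<in> V" if "j \<ge> -k'" for j
    using t2[rule_format, of "-j"] that by (simp add: p'_def)
  have r: "\<forall>j\<ge>k. P j \<tau> \<in> V"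
  proof (intro allI impI)
    fix j assume j: "j \<ge> k"
    have "P j s \<in> V" using s1 j by simp
    moreover have "-k' \<le> j" using j y1(2) y0(2) by (simp add: L_def)
    then have "P j (-\<tau> + s) \<in> V" by (rule t2')
    then have "-P j \<tau> + P j s \<in> V" by (simp add: P_add P_neg)
    ultimately show "P j \<tau> \<in> V" by (rule gV1)
  qed
  have "-x + \<tau> \<in> {w. \<forall>j\<in>{-int m..int m}. P j w \<in> V}"
  proof (simp, intro ballI)
    fix j assume j: "j \<in> {-int m..int m}"
    have a: "-P j x + P j y \<in> V" using hy1 j by (simp add: P_add P_neg)
    have "P j (-s + y) \<in> V" using s2 j y1(2) by simp
    then have "-P j s + P j y \<in> V" by (simp add: P_add P_neg)
    then have b: "-P j y + P j s \<in> V" by (rule gV3)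
    have "-k' \<le> j" using j y0(2) by (simp add: L_def)
    then have "P j (-\<tau> + s) \<in> V" by (rule t2')
    then have "-P j \<tau> + P j s \<in> V" by (simp add: P_add P_neg)
    then have c: "-P j s + P j \<tau> \<in> V" by (rule gV3)
    have "-P j x + P j \<tau> \<in> V" using gV2[OF gV2[OF a b] c] .
    then show "P j (-x + \<tau>) \<in> V" by (simp add: P_add P_neg)
  qed
  then have "\<tau> \<in> U" using m by (auto simp: U'_def add.assoc[symmetric])
  then show ?thesis using r t1 by blast
qed

end

context zact begin

lemma dense_main:
  assumes dense: "closure (range (\<lambda>k. P k z)) = UNIV"
  shows "closure {\<tau>. (\<exists>p. \<forall>j\<ge>p. P j \<tau> \<in> V) \<and> (\<exists>q. \<forall>j\<ge>q. P (-j) \<tau> \<in> V)} = UNIV"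
    (is "closure ?D = UNIV")
proof (cases "open {0::'a}")
  case True
  have sing: "open {w}" for w :: 'a
  proof -
    have "open ((\<lambda>u. -w + u) -` {0})" by (rule open_vimage[OF True cont_transl])
    moreover have "(\<lambda>u. -w + u) -` {0} = {w}" by (auto simp: neg_eq_iff_add_eq_0[symmetric])
    ultimately show ?thesis by simp
  qed
  have allopen: "open S" for S :: "'a set"
  proof -
    have "S = (\<Union>w\<in>S. {w})" by auto
    then show ?thesis using sing by (metis open_UN)
  qed
  have "closed (range (\<lambda>k. P k z))" unfolding closed_def by (rule allopen)
  then have "range (\<lambda>k. P k z) = UNIV" using dense by (simp add: closure_closed)
  then obtain k where k: "P k z = 0" by (metis UNIV_I image_iff)
  have "z = P (-k) (P k z)" using P_comp[of "-k" k z] by (simp add: P_0)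
  then have z0: "z = 0" using k by simp
  have "y \<in> ?D" for y
  proof -
    from \<open>range (\<lambda>k. P k z) = UNIV\<close> obtain j where "y = P j z" by (metis UNIV_I image_iff)
    then have "y = 0" using z0 by simp
    then show ?thesis using V0 by auto
  qed
  then have "?D = UNIV" by auto
  then show ?thesis by simp
next
  case False
  show ?thesis
  proof (rule ccontr)
    assume "closure ?D \<noteq> UNIV"
    then obtain x where x: "x \<notin> closure ?D" by auto
    have "open (- closure ?D)" by (rule open_Compl[OF closed_closure])
    have "x \<in> - closure ?D" using x by simp
    have "\<exists>\<tau>. \<tau> \<in> ?D \<and> \<tau> \<in> - closure ?D"
      using core[OF dense False \<open>open (- closure ?D)\<close> \<open>x \<in> - closure ?D\<close>] by simp
    then obtain \<tau> where t: "\<tau> \<in> ?D" "\<tau> \<in> - closure ?D" by (elim exE conjE)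
    have "?D \<subseteq> closure ?D" by (rule closure_subset)
    then show False using t by (meson subsetD ComplD)
  qed
qed

end

theorem corollary5p9:
  fixes \<alpha> :: "'a::{t2_space, group_add} \<Rightarrow> 'a"
  assumes "topological_group TYPE('a)"
    and "compact (UNIV :: 'a set)"
    and "top_group_automorphism \<alpha>"
    and "topologically_transitive \<alpha>"
    and "finite_depth \<alpha>"
  shows "closure (con \<alpha> \<inter> con (inv \<alpha>)) = UNIV"
proof -
  from assms(5) obtain V where V: "open V" "is_subgroup V" "(\<Inter>k. zpow \<alpha> k ` V) = {0}"
    unfolding finite_depth_def by blast
  from assms(3) have bij: "bij \<alpha>" and add: "\<And>x y. \<alpha> (x+y) = \<alpha> x + \<alpha> y"
    and c1: "continuous_on UNIV \<alpha>" and c2: "continuous_on UNIV (inv \<alpha>)"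
    unfolding top_group_automorphism_def by auto
  interpret zact "zpow \<alpha>" V
  proof
    show "topological_group TYPE('a)" by (rule assms(1))
    show "compact (UNIV::'a set)" by (rule assms(2))
    show "zpow \<alpha> k (x + y) = zpow \<alpha> k x + zpow \<alpha> k y" for k x y by (rule zpow_additive[OF bij add])
    show "zpow \<alpha> (a + b) x = zpow \<alpha> a (zpow \<alpha> b x)" for a b x by (rule zpow_add[OF bij])
    show "zpow \<alpha> 0 x = x" for x by (rule zpow_0)
    show "continuous_on UNIV (zpow \<alpha> k)" for k by (rule zpow_cont[OF bij c1 c2])
    show "open V" by (rule V(1))
    show "is_subgroup V" by (rule V(2))
    show "y = 0" if "\<forall>j. zpow \<alpha> j y \<in> V" for y
    proof -
      have yk: "y \<in> zpow \<alpha> k ` V" for k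
      proof
        show "y = zpow \<alpha> k (zpow \<alpha> (-k) y)" using zpow_add[OF bij, of k "-k" y] by (simp add: zpow_0)
        show "zpow \<alpha> (-k) y \<in> V" using that by simp
      qed
      have "y \<in> (\<Inter>k. zpow \<alpha> k ` V)" by (simp add: yk)
      then show ?thesis using V(3) by simp
    qed
  qed
  interpret mir: zact "\<lambda>k. zpow \<alpha> (-k)" V by (rule mirror)
  from assms(4) obtain z where z: "closure (range (\<lambda>k. zpow \<alpha> k z)) = UNIV"
    unfolding topologically_transitive_def by blast
  have sub: "{\<tau>. (\<exists>p. \<forall>j\<ge>p. zpow \<alpha> j \<tau> \<in> V) \<and> (\<exists>q. \<forall>j\<ge>q. zpow \<alpha> (-j) \<tau> \<in> V)} \<subseteq> con \<alpha> \<inter> con (inv \<alpha>)"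
  proof
    fix \<tau> assume "\<tau> \<in> {\<tau>. (\<exists>p. \<forall>j\<ge>p. zpow \<alpha> j \<tau> \<in> V) \<and> (\<exists>q. \<forall>j\<ge>q. zpow \<alpha> (-j) \<tau> \<in> V)}"
    then obtain p q where p: "\<forall>j\<ge>p. zpow \<alpha> j \<tau> \<in> V" and q: "\<forall>j\<ge>q. zpow \<alpha> (-j) \<tau> \<in> V" by blast
    have e1: "(\<lambda>n. (\<alpha> ^^ n) \<tau>) = (\<lambda>n. zpow \<alpha> (int n) \<tau>)" by (rule ext) (simp add: zpow_def)
    have e2: "(\<lambda>n. (inv \<alpha> ^^ n) \<tau>) = (\<lambda>n. zpow \<alpha> (- int n) \<tau>)"
    proof (rule ext)
      fix n show "(inv \<alpha> ^^ n) \<tau> = zpow \<alpha> (- int n) \<tau>" by (cases "n = 0") (simp_all add: zpow_def)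
    qed
    have "((\<lambda>n. (\<alpha> ^^ n) \<tau>) \<longlongrightarrow> 0) sequentially" unfolding e1 by (rule tends[OF p])
    moreover have "((\<lambda>n. (inv \<alpha> ^^ n) \<tau>) \<longlongrightarrow> 0) sequentially" unfolding e2 by (rule mir.tends[OF q])
    ultimately show "\<tau> \<in> con \<alpha> \<inter> con (inv \<alpha>)" by (simp add: con_def)
  qed
  have "UNIV = closure {\<tau>. (\<exists>p. \<forall>j\<ge>p. zpow \<alpha> j \<tau> \<in> V) \<and> (\<exists>q. \<forall>j\<ge>q. zpow \<alpha> (-j) \<tau> \<in> V)}"
    by (rule dense_main[OF z, symmetric])
  also have "\<dots> \<subseteq> closure (con \<alpha> \<inter> con (inv \<alpha>))" by (rule closure_mono[OF sub])
  finally show ?thesis by auto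
qed

end
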